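(* Let $\bm A=(A_1,\dots,A_d)$ be Hermitian matrices in $M_n(\mathbb{C})$, $B\in M_n(\mathbb{C})$, and $(\bm\lambda,\nu)\in\mathbb{R}^d\times\mathbb{C}$. Suppose there is a unit vector $\bm\psi\in\mathbb{C}^n$ with $$\sum_{i=1}^d\|A_i\bm\psi-\lambda_i\bm\psi\|^2+\|B\bm\psi-\nu\bm\psi\|^2\le\epsilon_1$$ and that $\sum_{i\neq k}\|[A_i,A_k]\|+\|F_{(\bm\lambda,\nu)}(\bm A,B)\|\le\epsilon_2$, for some $\epsilon_1,\epsilon_2\ge0$. Then $(\bm\lambda,\nu)\in\dot\Lambda^{C}_{\epsilon}(\bm A,B)$ with $\epsilon=\sqrt{\epsilon_1+\epsilon_2}$.
   Context: Let $n,d,m$ be positive integers. Fix Hermitian matrices $\Gamma_1,\dots,\Gamma_d\in M_{2m}(\mathbb{C})$ with $\Gamma_i^2=I_{2m}$ and $\Gamma_i\Gamma_j=-\Gamma_j\Gamma_i$ for $i\neq j$ (a Clifford representation; the paper uses a specific one built from Pauli matrices). Write $P=\begin{bmatrix} I_m&0\\0&0_m\end{bmatrix}$ and $Q=\begin{bmatrix}0_m&0\\0&I_m\end{bmatrix}$ in $M_{2m}(\mathbb{C})$. For a $d$-tuple $\bm A=(A_1,\dots,A_d)$ of Hermitian matrices in $M_n(\mathbb{C})$, a matrix $B\in M_n(\mathbb{C})$ (not necessarily Hermitian or normal), and a probe site $(\bm\lambda,\nu)\in\mathbb{R}^d\times\mathbb{C}$, the non-Hermitian spectral localizer is $$L_{(\bm\lambda,\nu)}(\bm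 A,B)=\sum_{i=1}^d (A_i-\lambda_i I)\otimes\Gamma_i+(B-\nu I)\otimes P-(B-\nu I)^\dagger\otimes Q\in M_{2mn}(\mathbb{C}).$$ The Clifford radial gap is $\dot\mu^{C}_{(\bm\lambda,\nu)}(\bm A,B)=\sigma_{\min}\big(L_{(\bm\lambda,\nu)}(\bm A,B)\big)$, and the Clifford radial $\epsilon$-pseudospectrum is $\dot\Lambda^{C}_\epsilon(\bm A,B)=\{(\bm\lambda,\nu)\in\mathbb{R}^d\times\mathbb{C}:\dot\mu^{C}_{(\bm\lambda,\nu)}(\bm A,B)\le\epsilon\}$. Define $$F_{(\bm\lambda,\nu)}(\bm A,B)=\sum_{i=1}^d\big(G_i+G_i^\dagger\big)-\sum_{i=1}^d\big(H_i+H_i^\dagger\big),\quad G_i=(A_i-\lambda_i I)(B-\nu I)\otimes\Gamma_iP,\quad H_i=(A_i-\lambda_i I)(B-\nu I)^\dagger\otimes\Gamma_iQ.$$ All matrix norms are operator norms; vector norms are Euclidean. *)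

theory Defs
  imports "Jordan_Normal_Form.Matrix"
begin

definition ctrans :: "complex mat \<Rightarrow> complex mat" where
  "ctrans M = mat (dim_col M) (dim_row M) (\<lambda>(i,j). cnj (M $$ (j,i)))"

definition hermitian_mat :: "complex mat \<Rightarrow> bool" where
  "hermitian_mat M \<longleftrightarrow> M \<in> carrier_mat (dim_row M) (dim_row M) \<and> ctrans M = M"

definition kron :: "complex mat \<Rightarrow> complex mat \<Rightarrow> complex mat" where
  "kron A B = mat (dim_row A * dim_row B) (dim_col A * dim_col B)
     (\<lambda>(i,j). A $$ (i div dim_row B, j div dim_col B) * B $$ (i mod dim_row B, j mod dim_col B))"

text \<open>Finite sum of N x N matrices (the library's sum does not track dimensions).\<close>
definition msum :: "nat \<Rightarrow> ('i \<Rightarrow> complex mat) \<Rightarrow> 'i set \<Rightarrow> complex mat" where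
  "msum N f I = mat N N (\<lambda>ij. \<Sum>k\<in>I. f k $$ ij)"

definition vnorm :: "complex vec \<Rightarrow> real" where
  "vnorm v = sqrt (\<Sum>i<dim_vec v. (cmod (v $ i))\<^sup>2)"

definition opnorm :: "complex mat \<Rightarrow> real" where
  "opnorm M = Sup {vnorm (M *\<^sub>v x) | x. x \<in> carrier_vec (dim_col M) \<and> vnorm x = 1}"

definition sigma_min :: "complex mat \<Rightarrow> real" where
  "sigma_min M = Inf {vnorm (M *\<^sub>v x) | x. x \<in> carrier_vec (dim_col M) \<and> vnorm x = 1}"

definition clifford_rep :: "nat \<Rightarrow> complex mat list \<Rightarrow> bool" where
  "clifford_rep m Gs \<longleftrightarrow>
     (\<forall>i<length Gs. Gs!i \<in> carrier_mat (2*m) (2*m) \<and> hermitian_mat (Gs!i)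
        \<and> Gs!i * Gs!i = 1\<^sub>m (2*m)
        \<and> (\<forall>j<length Gs. i \<noteq> j \<longrightarrow> Gs!i * Gs!j = - (Gs!j * Gs!i)))"

definition Pmat :: "nat \<Rightarrow> complex mat" where
  "Pmat m = mat (2*m) (2*m) (\<lambda>(i,j). if i = j \<and> i < m then 1 else 0)"

definition Qmat :: "nat \<Rightarrow> complex mat" where
  "Qmat m = mat (2*m) (2*m) (\<lambda>(i,j). if i = j \<and> m \<le> i then 1 else 0)"

definition localizer ::
  "nat \<Rightarrow> complex mat list \<Rightarrow> complex mat list \<Rightarrow> complex mat \<Rightarrow> real list \<Rightarrow> complex \<Rightarrow> complex mat" where
  "localizer m Gs As B lam nu =
     (let n = dim_row B; N = n * (2*m); Y = B - nu \<cdot>\<^sub>m 1\<^sub>m n in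
      msum N (\<lambda>i. kron (As!i - complex_of_real (lam!i) \<cdot>\<^sub>m 1\<^sub>m n) (Gs!i)) {..<length As}
      + kron Y (Pmat m) - kron (ctrans Y) (Qmat m))"

definition clifford_radial_gap ::
  "nat \<Rightarrow> complex mat list \<Rightarrow> complex mat list \<Rightarrow> complex mat \<Rightarrow> real list \<Rightarrow> complex \<Rightarrow> real" where
  "clifford_radial_gap m Gs As B lam nu = sigma_min (localizer m Gs As B lam nu)"

definition clifford_radial_pseudospectrum ::
  "nat \<Rightarrow> complex mat list \<Rightarrow> real \<Rightarrow> complex mat list \<Rightarrow> complex mat \<Rightarrow> (real list \<times> complex) set" where
  "clifford_radial_pseudospectrum m Gs eps As B =
     {(lam, nu). length lam = length As \<and> clifford_radial_gap m Gs As B lam nu \<le> eps}"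

definition Fmat ::
  "nat \<Rightarrow> complex mat list \<Rightarrow> complex mat list \<Rightarrow> complex mat \<Rightarrow> real list \<Rightarrow> complex \<Rightarrow> complex mat" where
  "Fmat m Gs As B lam nu =
     (let n = dim_row B; N = n * (2*m); Y = B - nu \<cdot>\<^sub>m 1\<^sub>m n;
          X = (\<lambda>i. As!i - complex_of_real (lam!i) \<cdot>\<^sub>m 1\<^sub>m n);
          G = (\<lambda>i. kron (X i * Y) (Gs!i * Pmat m));
          H = (\<lambda>i. kron (X i * ctrans Y) (Gs!i * Qmat m)) in
      msum N (\<lambda>i. G i + ctrans (G i)) {..<length As}
      - msum N (\<lambda>i. H i + ctrans (H i)) {..<length As})"

end

theory Submission
  imports Defs "HOL-Analysis.L2_Norm"
begin


lemma sum_nK: fixes n K :: nat shows "(\<Sum>c<n*K. f c) = (\<Sum>a<n. \<Sum>b<K. f (a*K+b))"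
proof (induction n)
  case 0 then show ?case by simp
next
  case (Suc n)
  have "{..<Suc n * K} = {..<n*K} \<union> {n*K..<n*K+K}" by auto
  then have "(\<Sum>c<Suc n*K. f c) = (\<Sum>c<n*K. f c) + (\<Sum>c\<in>{n*K..<n*K+K}. f c)"
    by (simp add: sum.union_disjoint ivl_disj_int)
  also have "(\<Sum>c\<in>{n*K..<n*K+K}. f c) = (\<Sum>b<K. f (n*K+b))"
    using sum.shift_bounds_nat_ivl[of f 0 "n*K" K] by (simp add: lessThan_atLeast0 add.commute)
  finally show ?case using Suc by simp
qed

lemma cs_sum:
  fixes x y :: "nat \<Rightarrow> complex"
  shows "cmod (\<Sum>a<n. cnj (x a) * y a) \<le> sqrt (\<Sum>a<n. (cmod (x a))\<^sup>2) * sqrt (\<Sum>a<n. (cmod (y a))\<^sup>2)"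
proof -
  have "cmod (\<Sum>a<n. cnj (x a) * y a) \<le> (\<Sum>a<n. cmod (cnj (x a) * y a))" by (rule norm_sum)
  also have "\<dots> = (\<Sum>a<n. \<bar>cmod (x a)\<bar> * \<bar>cmod (y a)\<bar>)" by (simp add: norm_mult)
  also have "\<dots> \<le> L2_set (\<lambda>a. cmod (x a)) {..<n} * L2_set (\<lambda>a. cmod (y a)) {..<n}" by (rule L2_set_mult_ineq)
  finally show ?thesis by (simp add: L2_set_def)
qed

lemma sum_cnj_self: "(\<Sum>a<n. cnj (x a) * x a) = complex_of_real (\<Sum>a<n. (cmod (x a))\<^sup>2)"
  unfolding of_real_sum by (rule sum.cong, simp, subst complex_norm_square, simp add: mult.commute)

definition ipn :: "nat \<Rightarrow> complex vec \<Rightarrow> complex vec \<Rightarrow> complex" where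
  "ipn n x y = (\<Sum>a<n. cnj (x$a) * y$a)"

lemma ip_cnj: "ipn n x y = cnj (ipn n y x)"
  unfolding ipn_def by (simp add: mult.commute)

lemma ip_adj:
  assumes "M \<in> carrier_mat n n" "x \<in> carrier_vec n" "y \<in> carrier_vec n"
  shows "ipn n x (ctrans M *\<^sub>v y) = ipn n (M *\<^sub>v x) y"
proof -
  have "ipn n x (ctrans M *\<^sub>v y) = (\<Sum>a<n. \<Sum>c<n. cnj (x$a) * cnj (M$$(c,a)) * y$c)"
    using assms unfolding ipn_def ctrans_def
    by (auto simp: scalar_prod_def sum_distrib_left lessThan_atLeast0 mult_ac intro!: sum.cong)
  also have "\<dots> = (\<Sum>c<n. \<Sum>a<n. cnj (x$a) * cnj (M$$(c,a)) * y$c)" by (rule sum.swap)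
  also have "\<dots> = ipn n (M *\<^sub>v x) y"
    using assms unfolding ipn_def
    apply (auto simp: scalar_prod_def sum_distrib_right lessThan_atLeast0 mult_ac intro!: sum.cong)
    apply (subst sum_distrib_left) apply (simp add: mult_ac)
    done
  finally show ?thesis .
qed

lemma sigma_min_le:
  assumes "x \<in> carrier_vec (dim_col M)" "vnorm x = 1"
  shows "sigma_min M \<le> vnorm (M *\<^sub>v x)"
  unfolding sigma_min_def
  by (rule cInf_lower) (use assms in \<open>auto simp: vnorm_def intro!: bdd_belowI[where m=0] sum_nonneg\<close>)

lemma unit_entry_le:
  assumes "vnorm x = 1" "c < dim_vec x"
  shows "cmod (x$c) \<le> 1"
proof -
  have "(\<Sum>i<dim_vec x. (cmod (x $ i))\<^sup>2) = 1" using assms(1) unfolding vnorm_def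
    by (metis real_sqrt_eq_1_iff)
  moreover have "(cmod (x$c))\<^sup>2 \<le> (\<Sum>i<dim_vec x. (cmod (x $ i))\<^sup>2)"
    using assms(2) by (intro member_le_sum) auto
  ultimately have "(cmod (x$c))\<^sup>2 \<le> 1" by simp
  then show ?thesis by (simp add: abs_square_le_1)
qed

lemma opnorm_ge:
  assumes "x \<in> carrier_vec (dim_col M)" "vnorm x = 1"
  shows "vnorm (M *\<^sub>v x) \<le> opnorm M"
  unfolding opnorm_def
proof (rule cSup_upper)
  show "vnorm (M *\<^sub>v x) \<in> {vnorm (M *\<^sub>v x) |x. x \<in> carrier_vec (dim_col M) \<and> vnorm x = 1}"
    using assms by auto
  let ?b = "sqrt (\<Sum>a<dim_row M. (\<Sum>c<dim_col M. cmod (M$$(a,c)))\<^sup>2)"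
  have "vnorm (M *\<^sub>v y) \<le> ?b" if y: "y \<in> carrier_vec (dim_col M)" "vnorm y = 1" for y
  proof -
    have "(cmod ((M *\<^sub>v y)$a))\<^sup>2 \<le> (\<Sum>c<dim_col M. cmod (M$$(a,c)))\<^sup>2" if a: "a < dim_row M" for a
    proof -
      have "cmod ((M *\<^sub>v y)$a) = cmod (\<Sum>c<dim_col M. M$$(a,c) * y$c)"
        using a y by (simp add: scalar_prod_def lessThan_atLeast0)
      also have "\<dots> \<le> (\<Sum>c<dim_col M. cmod (M$$(a,c) * y$c))" by (rule norm_sum)
      also have "\<dots> \<le> (\<Sum>c<dim_col M. cmod (M$$(a,c)))"
      proof (rule sum_mono)
        fix c assume "c \<in> {..<dim_col M}"
        then have "cmod (y$c) \<le> 1" using y unit_entry_le by auto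
        then show "cmod (M$$(a,c) * y$c) \<le> cmod (M$$(a,c))"
          by (simp add: norm_mult mult_left_le)
      qed
      finally show ?thesis by (simp add: power_mono)
    qed
    then show ?thesis unfolding vnorm_def by (auto intro!: sum_mono)
  qed
  then show "bdd_above {vnorm (M *\<^sub>v x) |x. x \<in> carrier_vec (dim_col M) \<and> vnorm x = 1}"
    by (auto intro!: bdd_aboveI[where M="?b"])
qed

lemma swap4: "(\<Sum>a\<in>A. \<Sum>b\<in>B. \<Sum>i\<in>I. \<Sum>k\<in>J. F a b i k) = (\<Sum>i\<in>I. \<Sum>k\<in>J. \<Sum>b\<in>B. \<Sum>a\<in>A. F a b i k)"
proof -
  have "(\<Sum>a\<in>A. \<Sum>b\<in>B. \<Sum>i\<in>I. \<Sum>k\<in>J. F a b i k) = (\<Sum>b\<in>B. \<Sum>a\<in>A. \<Sum>i\<in>I. \<Sum>k\<in>J. F a b i k)"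
    by (rule sum.swap)
  also have "\<dots> = (\<Sum>b\<in>B. \<Sum>i\<in>I. \<Sum>a\<in>A. \<Sum>k\<in>J. F a b i k)"
    by (rule sum.cong[OF refl], rule sum.swap)
  also have "\<dots> = (\<Sum>i\<in>I. \<Sum>b\<in>B. \<Sum>a\<in>A. \<Sum>k\<in>J. F a b i k)"
    by (rule sum.swap)
  also have "\<dots> = (\<Sum>i\<in>I. \<Sum>b\<in>B. \<Sum>k\<in>J. \<Sum>a\<in>A. F a b i k)"
    by (rule sum.cong[OF refl], rule sum.cong[OF refl], rule sum.swap)
  also have "\<dots> = (\<Sum>i\<in>I. \<Sum>k\<in>J. \<Sum>b\<in>B. \<Sum>a\<in>A. F a b i k)"
    by (rule sum.cong[OF refl], rule sum.swap)
  finally show ?thesis .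
qed

lemma sum_if0: fixes K :: nat assumes "0 < K"
  shows "(\<Sum>b<K. f b * (if b = 0 then c else 0)) = f 0 * (c::complex)"
        "(\<Sum>b<K. (if b = 0 then c else 0) * f b) = c * f 0"
  using assms by (simp_all add: if_distrib[of "\<lambda>x. f _ * x"] if_distrib[of "\<lambda>x. x * f _"] cong: if_cong)

lemma expand:
  fixes g u :: "nat \<Rightarrow> nat \<Rightarrow> complex" and w :: "nat \<Rightarrow> complex" and K :: nat
  assumes "0 < K"
  shows "(\<Sum>a<n. \<Sum>b<K. cnj ((\<Sum>i<d. g i b * u i a) + (if b = 0 then w a else 0))
                       * ((\<Sum>i<d. g i b * u i a) + (if b = 0 then w a else 0)))
    = (\<Sum>i<d. \<Sum>k<d. (\<Sum>b<K. cnj (g i b) * g k b) * (\<Sum>a<n. cnj (u i a) * u k a))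
      + (\<Sum>i<d. cnj (g i 0) * (\<Sum>a<n. cnj (u i a) * w a) + g i 0 * (\<Sum>a<n. cnj (w a) * u i a))
      + (\<Sum>a<n. cnj (w a) * w a)"
proof -
  define S where "S a b = (\<Sum>i<d. g i b * u i a)" for a b
  define T where "T a (b::nat) = (if b = 0 then w a else 0)" for a b
  have e: "cnj (S a b + T a b) * (S a b + T a b) = cnj (S a b) * S a b + (cnj (S a b) * T a b + cnj (T a b) * S a b) + cnj (T a b) * T a b" for a b
    by (simp add: algebra_simps)
  have 1: "(\<Sum>a<n. \<Sum>b<K. cnj (S a b) * S a b) = (\<Sum>i<d. \<Sum>k<d. (\<Sum>b<K. cnj (g i b) * g k b) * (\<Sum>a<n. cnj (u i a) * u k a))"
  proof -
    have "(\<Sum>a<n. \<Sum>b<K. cnj (S a b) * S a b) = (\<Sum>a<n. \<Sum>b<K. \<Sum>i<d. \<Sum>k<d. cnj (g i b) * g k b * (cnj (u i a) * u k a))"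
      unfolding S_def by (simp add: sum_distrib_left sum_distrib_right mult_ac)
    also have "\<dots> = (\<Sum>i<d. \<Sum>k<d. \<Sum>b<K. \<Sum>a<n. cnj (g i b) * g k b * (cnj (u i a) * u k a))"
      by (rule swap4)
    also have "\<dots> = (\<Sum>i<d. \<Sum>k<d. (\<Sum>b<K. cnj (g i b) * g k b) * (\<Sum>a<n. cnj (u i a) * u k a))"
      by (simp add: sum_product)
    finally show ?thesis .
  qed
  have 2: "(\<Sum>a<n. \<Sum>b<K. cnj (S a b) * T a b + cnj (T a b) * S a b) = (\<Sum>i<d. cnj (g i 0) * (\<Sum>a<n. cnj (u i a) * w a) + g i 0 * (\<Sum>a<n. cnj (w a) * u i a))"
  proof -
    have "(\<Sum>a<n. \<Sum>b<K. cnj (S a b) * T a b + cnj (T a b) * S a b) = (\<Sum>a<n. cnj (S a 0) * w a + cnj (w a) * S a 0)"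
      proof -
        have c: "cnj (T a b) = (if b = 0 then cnj (w a) else 0)" for a b by (simp add: T_def)
        show ?thesis unfolding c unfolding T_def using sum_if0[OF assms] by (simp add: sum.distrib)
      qed
    also have "\<dots> = (\<Sum>a<n. \<Sum>i<d. cnj (g i 0) * (cnj (u i a) * w a) + g i 0 * (cnj (w a) * u i a))"
      unfolding S_def by (simp add: sum_distrib_left sum_distrib_right sum.distrib mult_ac)
    also have "\<dots> = (\<Sum>i<d. \<Sum>a<n. cnj (g i 0) * (cnj (u i a) * w a) + g i 0 * (cnj (w a) * u i a))"
      by (rule sum.swap)
    also have "\<dots> = (\<Sum>i<d. cnj (g i 0) * (\<Sum>a<n. cnj (u i a) * w a) + g i 0 * (\<Sum>a<n. cnj (w a) * u i a))"
      by (simp add: sum_distrib_left sum.distrib)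
    finally show ?thesis .
  qed
  have 2: "(\<Sum>a<n. \<Sum>b<K. cnj (S a b) * T a b) + (\<Sum>a<n. \<Sum>b<K. cnj (T a b) * S a b) = (\<Sum>i<d. cnj (g i 0) * (\<Sum>a<n. cnj (u i a) * w a)) + (\<Sum>i<d. g i 0 * (\<Sum>a<n. cnj (w a) * u i a))"
    using 2 by (simp add: sum.distrib)
  have 3: "(\<Sum>a<n. \<Sum>b<K. cnj (T a b) * T a b) = (\<Sum>a<n. cnj (w a) * w a)"
    unfolding T_def using assms by (simp add: if_distrib[of "\<lambda>x. cnj x * _"] cong: if_cong)
  show ?thesis
    unfolding S_def[symmetric] T_def[symmetric] e sum.distrib 1 2 3 by simp
qed

definition phiv :: "nat \<Rightarrow> nat \<Rightarrow> complex vec \<Rightarrow> complex vec" where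
  "phiv n K psi = vec (n*K) (\<lambda>c. if c mod K = 0 then psi $ (c div K) else 0)"

lemma phi_mult:
  assumes "0 < K" "dim_col M = n*K" "r < dim_row M"
  shows "(M *\<^sub>v phiv n K psi) $ r = (\<Sum>a<n. M$$(r,a*K) * psi$a)"
proof -
  have "(M *\<^sub>v phiv n K psi) $ r = (\<Sum>c<n*K. M$$(r,c) * (phiv n K psi)$c)"
    using assms by (simp add: scalar_prod_def lessThan_atLeast0 phiv_def)
  also have "\<dots> = (\<Sum>a<n. \<Sum>b<K. M$$(r,a*K+b) * (phiv n K psi)$(a*K+b))" by (rule sum_nK)
  also have "\<dots> = (\<Sum>a<n. \<Sum>b<K. M$$(r,a*K+b) * (if b = 0 then psi$a else 0))"
  proof (rule sum.cong[OF refl], rule sum.cong[OF refl])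
    fix a b assume "a \<in> {..<n}" "b \<in> {..<K}"
    then have "(a+1)*K \<le> n*K" by (intro mult_le_mono1) auto
    then have "a*K+b < n*K" "(a*K+b) mod K = b" "(a*K+b) div K = a"
      using assms(1) \<open>b \<in> {..<K}\<close> by auto
    then show "M$$(r,a*K+b) * (phiv n K psi)$(a*K+b) = M$$(r,a*K+b) * (if b = 0 then psi$a else 0)"
      using assms(1) by (simp add: phiv_def)
  qed
  also have "\<dots> = (\<Sum>a<n. M$$(r,a*K) * psi$a)"
    using sum_if0[OF assms(1)] by simp
  finally show ?thesis .
qed

lemma idx_lt: fixes a b n K :: nat assumes "a < n" "b < K" shows "a*K+b < n*K"
proof -
  have "(a+1)*K \<le> n*K" using assms by (intro mult_le_mono1) auto
  then show ?thesis using assms by simp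
qed

lemma kron_idx:
  assumes "A \<in> carrier_mat n1 n2" "B \<in> carrier_mat k1 k2" "a < n1" "b < k1" "a' < n2" "b' < k2"
  shows "kron A B $$ (a*k1+b, a'*k2+b') = A$$(a,a') * B$$(b,b')"
  using assms idx_lt[of a n1 b k1] idx_lt[of a' n2 b' k2] unfolding kron_def by auto

lemma kron_idx0:
  assumes "A \<in> carrier_mat n1 n2" "B \<in> carrier_mat k1 k2" "a < n1" "b < k1" "a' < n2" "0 < k2"
  shows "kron A B $$ (a*k1+b, a'*k2) = A$$(a,a') * B$$(b,0)"
proof -
  have "kron A B $$ (a*k1+b, a'*k2+0) = A$$(a,a') * B$$(b,0)"
    by (rule kron_idx) (use assms in auto)
  then show ?thesis by (simp only: add_0_right)
qed

lemma kron_idx00: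
  assumes "A \<in> carrier_mat n1 n2" "B \<in> carrier_mat k1 k2" "a < n1" "0 < k1" "a' < n2" "0 < k2"
  shows "kron A B $$ (a*k1, a'*k2) = A$$(a,a') * B$$(0,0)"
proof -
  have "kron A B $$ (a*k1+0, a'*k2+0) = A$$(a,a') * B$$(0,0)"
    by (rule kron_idx) (use assms in auto)
  then show ?thesis by (simp only: add_0_right)
qed

lemma kron_carrier: "A \<in> carrier_mat n1 n2 \<Longrightarrow> B \<in> carrier_mat k1 k2 \<Longrightarrow> kron A B \<in> carrier_mat (n1*k1) (n2*k2)"
  unfolding kron_def by auto

lemma ctrans_carrier: "A \<in> carrier_mat n1 n2 \<Longrightarrow> ctrans A \<in> carrier_mat n2 n1"
  unfolding ctrans_def by auto

lemma ctrans_idx: "i < dim_col A \<Longrightarrow> j < dim_row A \<Longrightarrow> ctrans A $$ (i,j) = cnj (A $$ (j,i))"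
  unfolding ctrans_def by auto

lemma msum_idx: "i < N \<Longrightarrow> j < N \<Longrightarrow> msum N f I $$ (i,j) = (\<Sum>k\<in>I. f k $$ (i,j))"
  "msum N f I \<in> carrier_mat N N"
  unfolding msum_def by auto

lemma msum_dims[simp]: "dim_row (msum N f I) = N" "dim_col (msum N f I) = N"
  unfolding msum_def by auto

lemma herm_idx: assumes "hermitian_mat A" "i < dim_row A" "j < dim_row A"
  shows "A $$ (i,j) = cnj (A $$ (j,i))"
proof -
  have c: "dim_col A = dim_row A" "ctrans A = A" using assms(1) unfolding hermitian_mat_def carrier_mat_def by auto
  have "ctrans A $$ (i,j) = cnj (A $$ (j,i))" using assms(2,3) c(1) by (intro ctrans_idx) simp_all
  then show ?thesis unfolding c(2) .
qed

lemma shiftI_vec: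
  fixes A :: "complex mat"
  assumes "A \<in> carrier_mat n n" "v \<in> carrier_vec n"
  shows "(A - c \<cdot>\<^sub>m 1\<^sub>m n) *\<^sub>v v = A *\<^sub>v v - c \<cdot>\<^sub>v v"
proof (rule eq_vecI)
  fix a assume "a < dim_vec (A *\<^sub>v v - c \<cdot>\<^sub>v v)"
  then have a: "a < n" using assms by simp
  have t: "(A - c \<cdot>\<^sub>m 1\<^sub>m n) $$ (a,j) * v$j = A$$(a,j) * v$j - (if a = j then c * v$j else 0)" if "j < n" for j
    using assms a that by (cases "a = j") (simp_all add: left_diff_distrib)
  have "((A - c \<cdot>\<^sub>m 1\<^sub>m n) *\<^sub>v v) $ a = (\<Sum>j\<in>{0..<n}. (A - c \<cdot>\<^sub>m 1\<^sub>m n) $$ (a,j) * v$j)"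
    using assms a by (simp add: scalar_prod_def)
  also have "\<dots> = (\<Sum>j\<in>{0..<n}. A$$(a,j) * v$j - (if a = j then c * v$j else 0))"
    by (rule sum.cong) (auto simp: t)
  also have "\<dots> = (A *\<^sub>v v - c \<cdot>\<^sub>v v) $ a"
    using assms a by (simp add: sum_subtractf scalar_prod_def)
  finally show "((A - c \<cdot>\<^sub>m 1\<^sub>m n) *\<^sub>v v) $ a = (A *\<^sub>v v - c \<cdot>\<^sub>v v) $ a" .
qed (use assms in auto)

lemma shift_prod_idx:
  fixes A B :: "complex mat"
  assumes "A \<in> carrier_mat n n" "B \<in> carrier_mat n n" "i < n" "j < n"
  shows "((A - a \<cdot>\<^sub>m 1\<^sub>m n) * (B - b \<cdot>\<^sub>m 1\<^sub>m n)) $$ (i,j) = (\<Sum>c\<in>{0..<n}. A$$(i,c) * B$$(c,j)) - b * A$$(i,j) - a * B$$(i,j) + (if i = j then a*b else 0)"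
proof -
  have t: "(A - a \<cdot>\<^sub>m 1\<^sub>m n) $$ (i,c) * (B - b \<cdot>\<^sub>m 1\<^sub>m n) $$ (c,j) = A$$(i,c) * B$$(c,j) - (if c = j then b * A$$(i,c) else 0) - (if i = c then a * B$$(c,j) else 0) + (if c = i then (if i = j then a * b else 0) else 0)" if "c < n" for c
    using assms that by (cases "i = c"; cases "c = j") (simp_all add: left_diff_distrib right_diff_distrib)
  have "((A - a \<cdot>\<^sub>m 1\<^sub>m n) * (B - b \<cdot>\<^sub>m 1\<^sub>m n)) $$ (i,j) = (\<Sum>c\<in>{0..<n}. (A - a \<cdot>\<^sub>m 1\<^sub>m n) $$ (i,c) * (B - b \<cdot>\<^sub>m 1\<^sub>m n) $$ (c,j))"
    using assms by (simp add: scalar_prod_def)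
  also have "\<dots> = (\<Sum>c\<in>{0..<n}. A$$(i,c) * B$$(c,j) - (if c = j then b * A$$(i,c) else 0) - (if i = c then a * B$$(c,j) else 0) + (if c = i then (if i = j then a * b else 0) else 0))"
    by (rule sum.cong) (auto simp: t)
  also have "\<dots> = (\<Sum>c\<in>{0..<n}. A$$(i,c) * B$$(c,j)) - b * A$$(i,j) - a * B$$(i,j) + (if i = j then a*b else 0)"
    using assms by (simp add: sum.distrib sum_subtractf)
  finally show ?thesis .
qed

lemma shift_comm:
  fixes A B :: "complex mat"
  assumes "A \<in> carrier_mat n n" "B \<in> carrier_mat n n"
  shows "(A - a \<cdot>\<^sub>m 1\<^sub>m n) * (B - b \<cdot>\<^sub>m 1\<^sub>m n) - (B - b \<cdot>\<^sub>m 1\<^sub>m n) * (A - a \<cdot>\<^sub>m 1\<^sub>m n) = A * B - B * A"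
proof (rule eq_matI)
  fix i j assume ij: "i < dim_row (A * B - B * A)" "j < dim_col (A * B - B * A)"
  then have i: "i < n" and j: "j < n" using assms by auto
  show "((A - a \<cdot>\<^sub>m 1\<^sub>m n) * (B - b \<cdot>\<^sub>m 1\<^sub>m n) - (B - b \<cdot>\<^sub>m 1\<^sub>m n) * (A - a \<cdot>\<^sub>m 1\<^sub>m n)) $$ (i,j) = (A * B - B * A) $$ (i,j)"
    using assms i j shift_prod_idx[OF assms(1,2) i j, of a b] shift_prod_idx[OF assms(2,1) i j, of b a]
    by (simp add: scalar_prod_def mult.commute)
qed (use assms in auto)

lemma mv_idx: assumes "M \<in> carrier_mat n n" "v \<in> carrier_vec n" "a < n"
  shows "(M *\<^sub>v v) $ a = (\<Sum>c<n. M$$(a,c) * v$c)"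
  using assms by (simp add: scalar_prod_def lessThan_atLeast0)

lemma swap3: "(\<Sum>a\<in>A. \<Sum>b\<in>B. \<Sum>i\<in>I. F a b i) = (\<Sum>i\<in>I. \<Sum>a\<in>A. \<Sum>b\<in>B. F a b i)"
proof -
  have "(\<Sum>a\<in>A. \<Sum>b\<in>B. \<Sum>i\<in>I. F a b i) = (\<Sum>a\<in>A. \<Sum>i\<in>I. \<Sum>b\<in>B. F a b i)"
    by (rule sum.cong[OF refl], rule sum.swap)
  also have "\<dots> = (\<Sum>i\<in>I. \<Sum>a\<in>A. \<Sum>b\<in>B. F a b i)" by (rule sum.swap)
  finally show ?thesis .
qed

lemma lin2: fixes x :: "nat \<Rightarrow> nat \<Rightarrow> complex"
  shows "(\<Sum>a'<n. ((\<Sum>i<d. x i a' * g i) + y a' * p) * q a') = (\<Sum>i<d. g i * (\<Sum>a'<n. x i a' * q a')) + p * (\<Sum>a'<n. y a' * q a')"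
proof -
  have "(\<Sum>a'<n. ((\<Sum>i<d. x i a' * g i) + y a' * p) * q a') = (\<Sum>a'<n. \<Sum>i<d. g i * (x i a' * q a')) + (\<Sum>a'<n. p * (y a' * q a'))"
    by (simp add: ring_distribs sum_distrib_left sum_distrib_right sum.distrib mult_ac)
  also have "(\<Sum>a'<n. \<Sum>i<d. g i * (x i a' * q a')) = (\<Sum>i<d. \<Sum>a'<n. g i * (x i a' * q a'))" by (rule sum.swap)
  finally show ?thesis by (simp add: sum_distrib_left)
qed

lemma ip_sum_lin: fixes p :: "nat \<Rightarrow> complex"
  shows "(\<Sum>a<n. cnj (p a) * (\<Sum>a'<n. (\<Sum>i<d. c i * (f i a a' + h i a a')) * q a'))
   = (\<Sum>i<d. c i * ((\<Sum>a<n. cnj (p a) * (\<Sum>a'<n. f i a a' * q a')) + (\<Sum>a<n. cnj (p a) * (\<Sum>a'<n. h i a a' * q a'))))"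
proof -
  have "(\<Sum>a<n. cnj (p a) * (\<Sum>a'<n. (\<Sum>i<d. c i * (f i a a' + h i a a')) * q a'))
     = (\<Sum>a<n. \<Sum>a'<n. \<Sum>i<d. c i * (cnj (p a) * (f i a a' * q a')) + c i * (cnj (p a) * (h i a a' * q a')))"
    by (simp add: sum_distrib_left sum_distrib_right ring_distribs mult_ac)
  also have "\<dots> = (\<Sum>i<d. \<Sum>a<n. \<Sum>a'<n. c i * (cnj (p a) * (f i a a' * q a')) + c i * (cnj (p a) * (h i a a' * q a')))"
    by (rule swap3)
  also have "\<dots> = (\<Sum>i<d. c i * ((\<Sum>a<n. cnj (p a) * (\<Sum>a'<n. f i a a' * q a')) + (\<Sum>a<n. cnj (p a) * (\<Sum>a'<n. h i a a' * q a'))))"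
    by (simp add: sum_distrib_left sum.distrib ring_distribs)
  finally show ?thesis .
qed

lemma phi_idx: assumes "a < n" "b < K"
  shows "phiv n K psi $ (a*K+b) = (if b = 0 then psi$a else 0)"
proof -
  have "a*K+b < n*K" "(a*K+b) mod K = b" "(a*K+b) div K = a" using assms idx_lt[OF assms] by auto
  then show ?thesis using assms by (simp add: phiv_def)
qed

lemma phi_carrier: "phiv n K psi \<in> carrier_vec (n*K)" unfolding phiv_def by simp

lemma phi_norm: assumes "0 < K" "psi \<in> carrier_vec n"
  shows "vnorm (phiv n K psi) = vnorm psi"
proof -
  have "(\<Sum>c<n*K. (cmod (phiv n K psi $ c))\<^sup>2) = (\<Sum>a<n. \<Sum>b<K. (cmod (phiv n K psi $ (a*K+b)))\<^sup>2)"
    by (rule sum_nK)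
  also have "\<dots> = (\<Sum>a<n. \<Sum>b<K. (if b = 0 then (cmod (psi$a))\<^sup>2 else 0))"
    by (intro sum.cong refl) (simp add: phi_idx)
  also have "\<dots> = (\<Sum>a<n. (cmod (psi$a))\<^sup>2)" using assms(1) by simp
  finally show ?thesis using assms(2) unfolding vnorm_def by (simp add: phiv_def)
qed

lemma ipn_phi: assumes "0 < K"
  shows "ipn (n*K) (phiv n K psi) v = (\<Sum>a<n. cnj (psi$a) * v$(a*K))"
proof -
  have "ipn (n*K) (phiv n K psi) v = (\<Sum>a<n. \<Sum>b<K. cnj (phiv n K psi $ (a*K+b)) * v$(a*K+b))"
    unfolding ipn_def by (rule sum_nK)
  also have "\<dots> = (\<Sum>a<n. \<Sum>b<K. (if b = 0 then cnj (psi$a) * v$(a*K) else 0))"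
    by (intro sum.cong refl) (simp add: phi_idx)
  also have "\<dots> = (\<Sum>a<n. cnj (psi$a) * v$(a*K))" using assms(1) by simp
  finally show ?thesis .
qed

lemma re_cnj: "Re (cnj z * z) = (cmod z)\<^sup>2"
  by (metis Re_complex_of_real complex_norm_square mult.commute)

lemma ip_minus: assumes "v1 \<in> carrier_vec n" "v2 \<in> carrier_vec n"
  shows "ipn n x (v1 - v2) = ipn n x v1 - ipn n x v2"
  using assms unfolding ipn_def by (simp add: sum_subtractf right_diff_distrib)

lemma ip_self: assumes "v \<in> carrier_vec n" shows "ipn n v v = complex_of_real ((vnorm v)\<^sup>2)"
proof -
  have "ipn n v v = complex_of_real (\<Sum>a<n. (cmod (v $ a))\<^sup>2)" unfolding ipn_def by (rule sum_cnj_self)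
  moreover have "(vnorm v)\<^sup>2 = (\<Sum>a<n. (cmod (v $ a))\<^sup>2)"
    using assms unfolding vnorm_def by (simp add: sum_nonneg)
  ultimately show ?thesis by simp
qed

lemma ip_bound: assumes "x \<in> carrier_vec n" "y \<in> carrier_vec n"
  shows "cmod (ipn n x y) \<le> vnorm x * vnorm y"
  using cs_sum[of "\<lambda>a. x$a" "\<lambda>a. y$a" n] assms unfolding ipn_def vnorm_def by simp

lemma sum_offdiag: fixes d :: nat shows "(\<Sum>i<d. \<Sum>k<d. f i k) = (\<Sum>i<d. f i i) + (\<Sum>(i,k)\<in>{(i,k). i < d \<and> k < d \<and> i \<noteq> k}. f i k)"
proof -
  have "(\<Sum>i<d. \<Sum>k<d. f i k) = (\<Sum>i<d. f i i + (\<Sum>k\<in>{..<d}-{i}. f i k))"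
    by (intro sum.cong refl) (rule sum.remove, auto)
  also have "\<dots> = (\<Sum>i<d. f i i) + (\<Sum>i<d. \<Sum>k\<in>{..<d}-{i}. f i k)" by (simp add: sum.distrib)
  also have "(\<Sum>i<d. \<Sum>k\<in>{..<d}-{i}. f i k) = (\<Sum>(i,k)\<in>Sigma {..<d} (\<lambda>i. {..<d}-{i}). f i k)"
    by (rule sum.Sigma) auto
  also have "Sigma {..<d} (\<lambda>i. {..<d}-{i}) = {(i,k). i < d \<and> k < d \<and> i \<noteq> k}" by auto
  finally show ?thesis .
qed

lemma sum_swap_offdiag: fixes d :: nat shows "(\<Sum>(i,k)\<in>{(i,k). i < d \<and> k < d \<and> i \<noteq> k}. f i k) = (\<Sum>(i,k)\<in>{(i,k). i < d \<and> k < d \<and> i \<noteq> k}. f k i)"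
  by (rule sum.reindex_bij_witness[where i="\<lambda>(i,k). (k,i)" and j="\<lambda>(i,k). (k,i)"]) auto

lemma finite_offdiag: "finite {(i,k). i < d \<and> k < (d::nat) \<and> i \<noteq> k}"
  by (rule finite_subset[of _ "{..<d} \<times> {..<d}"]) auto

lemma offdiag_bound:
  fixes C U :: "nat \<Rightarrow> nat \<Rightarrow> complex" and E :: "nat \<Rightarrow> nat \<Rightarrow> real"
  assumes "\<And>i k. i < d \<Longrightarrow> k < d \<Longrightarrow> i \<noteq> k \<Longrightarrow> C k i = - C i k"
    "\<And>i k. i < d \<Longrightarrow> k < d \<Longrightarrow> i \<noteq> k \<Longrightarrow> cmod (C i k) \<le> 1"
    "\<And>i k. i < d \<Longrightarrow> k < d \<Longrightarrow> i \<noteq> k \<Longrightarrow> cmod (U i k - U k i) \<le> E i k"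
  shows "cmod (\<Sum>(i,k)\<in>{(i,k). i < d \<and> k < d \<and> i \<noteq> k}. C i k * U i k) \<le> (\<Sum>(i,k)\<in>{(i,k). i < d \<and> k < d \<and> i \<noteq> k}. E i k)"
proof -
  let ?S = "{(i,k). i < d \<and> k < d \<and> i \<noteq> k}"
  let ?O = "(\<Sum>(i,k)\<in>?S. C i k * U i k)"
  have "2 * ?O = ?O + (\<Sum>(i,k)\<in>?S. C k i * U k i)" using sum_swap_offdiag[where d=d and f="\<lambda>i k. C i k * U i k"] by simp
  also have "\<dots> = (\<Sum>(i,k)\<in>?S. C i k * U i k + C k i * U k i)" by (simp add: sum.distrib split_def)
  also have "\<dots> = (\<Sum>(i,k)\<in>?S. C i k * (U i k - U k i))"
  proof (rule sum.cong[OF refl])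
    fix p assume "p \<in> ?S"
    then obtain i k where p: "p = (i,k)" "i < d" "k < d" "i \<noteq> k" by auto
    have "C k i = - C i k" by (rule assms(1)[OF p(2-4)])
    then show "(case p of (i,k) \<Rightarrow> C i k * U i k + C k i * U k i) = (case p of (i,k) \<Rightarrow> C i k * (U i k - U k i))"
      using p(1) by (simp add: algebra_simps)
  qed
  finally have e: "2 * ?O = (\<Sum>(i,k)\<in>?S. C i k * (U i k - U k i))" .
  have "cmod (2 * ?O) = cmod (\<Sum>(i,k)\<in>?S. C i k * (U i k - U k i))" by (simp only: e)
  also have "\<dots> \<le> (\<Sum>(i,k)\<in>?S. cmod (C i k * (U i k - U k i)))"
    unfolding split_def by (rule norm_sum)
  also have "\<dots> \<le> (\<Sum>(i,k)\<in>?S. E i k)"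
  proof (rule sum_mono)
    fix p assume "p \<in> ?S"
    then obtain i k where p: "p = (i,k)" "i < d" "k < d" "i \<noteq> k" by auto
    have "cmod (C i k) * cmod (U i k - U k i) \<le> 1 * E i k"
      using assms(2,3)[OF p(2-4)] by (intro mult_mono) auto
    then show "(case p of (i,k) \<Rightarrow> cmod (C i k * (U i k - U k i))) \<le> (case p of (i,k) \<Rightarrow> E i k)"
      using p by (simp add: norm_mult)
  qed
  finally have 1: "2 * cmod ?O \<le> (\<Sum>(i,k)\<in>?S. E i k)" by (simp add: norm_mult)
  have "0 \<le> (\<Sum>(i,k)\<in>?S. E i k)"
    by (rule sum_nonneg) (auto intro: order.trans[OF norm_ge_zero assms(3)])
  with 1 show ?thesis by simp
qed



theorem mainTheorem4:
  fixes n m :: nat and Gs As :: "complex mat list" and B :: "complex mat"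
    and lam :: "real list" and nu :: complex and psi :: "complex vec"
    and eps1 eps2 :: real
  assumes "n > 0" and "m > 0" and "length As > 0"
    and "length Gs = length As" and "clifford_rep m Gs"
    and "\<forall>i<length As. As!i \<in> carrier_mat n n \<and> hermitian_mat (As!i)"
    and "B \<in> carrier_mat n n"
    and "length lam = length As"
    and "psi \<in> carrier_vec n" and "vnorm psi = 1"
    and "eps1 \<ge> 0" and "eps2 \<ge> 0"
    and "(\<Sum>i<length As. (vnorm (As!i *\<^sub>v psi - complex_of_real (lam!i) \<cdot>\<^sub>v psi))\<^sup>2)
           + (vnorm (B *\<^sub>v psi - nu \<cdot>\<^sub>v psi))\<^sup>2 \<le> eps1"
    and "(\<Sum>(i,k)\<in>{(i,k). i < length As \<and> k < length As \<and> i \<noteq> k}.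
             opnorm (As!i * As!k - As!k * As!i))
           + opnorm (Fmat m Gs As B lam nu) \<le> eps2"
  shows "(lam, nu) \<in> clifford_radial_pseudospectrum m Gs (sqrt (eps1 + eps2)) As B"
proof -
  define d where "d = length As"
  define K where "K = 2*m"
  define N where "N = n*K"
  have K0: "0 < K" using assms(2) K_def by simp
  have Bn: "dim_row B = n" using assms(7) by simp
  define X where "X i = As!i - complex_of_real (lam!i) \<cdot>\<^sub>m 1\<^sub>m n" for i
  define Y where "Y = B - nu \<cdot>\<^sub>m 1\<^sub>m n"
  define u where "u i = As!i *\<^sub>v psi - complex_of_real (lam!i) \<cdot>\<^sub>v psi" for i
  define w where "w = B *\<^sub>v psi - nu \<cdot>\<^sub>v psi"
  define phi where "phi = phiv n K psi"
  define L where "L = localizer m Gs As B lam nu"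
  define F where "F = Fmat m Gs As B lam nu"
  have Ac: "As!i \<in> carrier_mat n n" and Ah: "hermitian_mat (As!i)" if "i < d" for i
    using assms(6) that d_def by auto
  have cr: "\<forall>i<d. Gs!i \<in> carrier_mat K K \<and> hermitian_mat (Gs!i)
        \<and> Gs!i * Gs!i = 1\<^sub>m K
        \<and> (\<forall>j<d. i \<noteq> j \<longrightarrow> Gs!i * Gs!j = - (Gs!j * Gs!i))"
    using assms(4,5) unfolding d_def K_def clifford_rep_def by metis
  have Gc: "Gs!i \<in> carrier_mat K K" and Gh: "hermitian_mat (Gs!i)" and Gsq: "Gs!i * Gs!i = 1\<^sub>m K"
    if "i < d" for i
    using cr that by blast+
  have Ganti: "Gs!i * Gs!k = - (Gs!k * Gs!i)" if "i < d" "k < d" "i \<noteq> k" for i k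
    using cr that by blast
  have Xc: "X i \<in> carrier_mat n n" if "i < d" for i
    using Ac[OF that] unfolding X_def by auto
  have Xh: "ctrans (X i) = X i" if "i < d" for i
  proof (rule eq_matI)
    fix a b assume ab: "a < dim_row (X i)" "b < dim_col (X i)"
    then have a: "a < n" and b: "b < n" using Xc[OF that] by auto
    have "ctrans (X i) $$ (a,b) = cnj (X i $$ (b,a))" using Xc[OF that] a b by (simp add: ctrans_idx)
    also have "\<dots> = X i $$ (a,b)"
      using Ac[OF that] a b herm_idx[OF Ah[OF that], of b a] unfolding X_def by auto
    finally show "ctrans (X i) $$ (a,b) = X i $$ (a,b)" .
  qed (use Xc[OF that] in \<open>auto simp: ctrans_def\<close>)
  have Yc: "Y \<in> carrier_mat n n" using assms(7) unfolding Y_def by auto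
  have Xu: "X i *\<^sub>v psi = u i" if "i < d" for i
    unfolding X_def u_def by (rule shiftI_vec[OF Ac[OF that] assms(9)])
  have Yw: "Y *\<^sub>v psi = w"
    unfolding Y_def w_def by (rule shiftI_vec[OF assms(7,9)])
  have uc: "u i \<in> carrier_vec n" if "i < d" for i
    using Ac[OF that] assms(9) unfolding u_def by auto
  have wc: "w \<in> carrier_vec n" using assms(7,9) unfolding w_def by auto
  have Pc: "Pmat m \<in> carrier_mat K K" unfolding Pmat_def K_def by auto
  have Qc: "Qmat m \<in> carrier_mat K K" unfolding Qmat_def K_def by auto
  have Pidx: "Pmat m $$ (b,0) = (if b = 0 then 1 else 0)" if "b < K" for b
    using that assms(2) unfolding Pmat_def K_def by auto
  have Qidx: "Qmat m $$ (b,0) = 0" if "b < K" for b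
    using that assms(2) unfolding Qmat_def K_def by auto
  have L_eq: "L = msum N (\<lambda>i. kron (X i) (Gs!i)) {..<d} + kron Y (Pmat m) - kron (ctrans Y) (Qmat m)"
    unfolding L_def localizer_def Let_def Bn X_def Y_def N_def K_def d_def by simp
  have cYc: "ctrans Y \<in> carrier_mat n n" using ctrans_carrier[OF Yc] .
  have M3c: "kron (ctrans Y) (Qmat m) \<in> carrier_mat N N" unfolding N_def by (rule kron_carrier[OF cYc Qc])
  have M2c: "kron Y (Pmat m) \<in> carrier_mat N N" unfolding N_def by (rule kron_carrier[OF Yc Pc])
  have Lc: "L \<in> carrier_mat N N" unfolding L_eq using M3c M2c msum_idx(2) by auto
  have Lidx: "L $$ (a*K+b, a'*K) = (\<Sum>i<d. X i $$ (a,a') * Gs!i $$ (b,0)) + Y$$(a,a') * (if b = 0 then 1 else 0)"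
    if ab: "a < n" "b < K" "a' < n" for a b a'
  proof -
    have r: "a*K+b < N" using idx_lt[OF ab(1,2)] N_def by simp
    have c: "a'*K < N" using idx_lt[OF ab(3) K0] N_def by simp
    have "L $$ (a*K+b, a'*K) = msum N (\<lambda>i. kron (X i) (Gs!i)) {..<d} $$ (a*K+b, a'*K)
        + kron Y (Pmat m) $$ (a*K+b, a'*K) - kron (ctrans Y) (Qmat m) $$ (a*K+b, a'*K)"
      unfolding L_eq using r c M2c M3c by simp
    also have "msum N (\<lambda>i. kron (X i) (Gs!i)) {..<d} $$ (a*K+b, a'*K) = (\<Sum>i<d. X i $$ (a,a') * Gs!i $$ (b,0))"
      using r c by (simp add: msum_idx kron_idx0[OF Xc Gc ab(1,2,3) K0])
    also have "kron Y (Pmat m) $$ (a*K+b, a'*K) = Y$$(a,a') * (if b = 0 then 1 else 0)"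
      using kron_idx0[OF Yc Pc ab(1,2,3) K0] Pidx[OF ab(2)] by simp
    also have "kron (ctrans Y) (Qmat m) $$ (a*K+b, a'*K) = 0"
      using kron_idx0[OF cYc Qc ab(1,2,3) K0] Qidx[OF ab(2)] by simp
    finally show ?thesis by simp
  qed
  have Lphi: "(L *\<^sub>v phi) $ (a*K+b) = (\<Sum>i<d. Gs!i $$ (b,0) * u i $ a) + (if b = 0 then w $ a else 0)"
    if ab: "a < n" "b < K" for a b
  proof -
    have r: "a*K+b < N" using idx_lt[OF ab(1,2)] N_def by simp
    have "(L *\<^sub>v phi) $ (a*K+b) = (\<Sum>a'<n. L$$(a*K+b,a'*K) * psi$a')"
      unfolding phi_def by (rule phi_mult[OF K0]) (use Lc r N_def in auto)
    also have "\<dots> = (\<Sum>a'<n. ((\<Sum>i<d. X i $$ (a,a') * Gs!i $$ (b,0)) + Y$$(a,a') * (if b = 0 then 1 else 0)) * psi$a')"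
      by (intro sum.cong refl) (simp add: Lidx ab)
    also have "\<dots> = (\<Sum>i<d. Gs!i $$ (b,0) * (\<Sum>a'<n. X i $$ (a,a') * psi$a')) + (if b = 0 then 1 else 0) * (\<Sum>a'<n. Y$$(a,a') * psi$a')"
      by (rule lin2)
    also have "\<dots> = (\<Sum>i<d. Gs!i $$ (b,0) * u i $ a) + (if b = 0 then w $ a else 0)"
    proof -
      have "(\<Sum>a'<n. X i $$ (a,a') * psi$a') = u i $ a" if "i \<in> {..<d}" for i
        using mv_idx[OF Xc assms(9) ab(1), of i] Xu[of i] that by simp
      moreover have "(\<Sum>a'<n. Y$$(a,a') * psi$a') = w $ a"
        using mv_idx[OF Yc assms(9) ab(1)] Yw by simp
      ultimately show ?thesis by simp
    qed
    finally show ?thesis .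
  qed
  define C where "C i k = (\<Sum>b<K. cnj (Gs!i $$ (b,0)) * Gs!k $$ (b,0))" for i k
  define U where "U i k = ipn n (u i) (u k)" for i k
  define g0 where "g0 i = Gs!i $$ (0,0)" for i
  define Cross where "Cross = (\<Sum>i<d. cnj (g0 i) * ipn n (u i) w + g0 i * ipn n w (u i))"
  have phic: "phi \<in> carrier_vec N" unfolding phi_def N_def by (rule phi_carrier)
  have phin: "vnorm phi = 1" unfolding phi_def using phi_norm[OF K0 assms(9)] assms(10) by simp
  have vL: "(vnorm (L *\<^sub>v phi))\<^sup>2 = Re ((\<Sum>i<d. \<Sum>k<d. C i k * U i k) + Cross + ipn n w w)"
  proof -
    have "(vnorm (L *\<^sub>v phi))\<^sup>2 = (\<Sum>r<N. (cmod ((L *\<^sub>v phi) $ r))\<^sup>2)"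
      using Lc unfolding vnorm_def by (simp add: sum_nonneg)
    also have "\<dots> = (\<Sum>a<n. \<Sum>b<K. (cmod ((L *\<^sub>v phi) $ (a*K+b)))\<^sup>2)"
      unfolding N_def by (rule sum_nK)
    also have "\<dots> = (\<Sum>a<n. \<Sum>b<K. (cmod ((\<Sum>i<d. Gs!i $$ (b,0) * u i $ a) + (if b = 0 then w $ a else 0)))\<^sup>2)"
      by (intro sum.cong refl) (simp add: Lphi)
    also have "\<dots> = Re (\<Sum>a<n. \<Sum>b<K. cnj ((\<Sum>i<d. Gs!i $$ (b,0) * u i $ a) + (if b = 0 then w $ a else 0))
                       * ((\<Sum>i<d. Gs!i $$ (b,0) * u i $ a) + (if b = 0 then w $ a else 0)))"
      by (simp only: Re_sum re_cnj)
    also have "(\<Sum>a<n. \<Sum>b<K. cnj ((\<Sum>i<d. Gs!i $$ (b,0) * u i $ a) + (if b = 0 then w $ a else 0))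
                       * ((\<Sum>i<d. Gs!i $$ (b,0) * u i $ a) + (if b = 0 then w $ a else 0)))
       = (\<Sum>i<d. \<Sum>k<d. C i k * U i k) + Cross + ipn n w w"
      unfolding C_def U_def Cross_def ipn_def g0_def by (rule expand[OF K0])
    finally show ?thesis .
  qed
  have Cprod: "C i k = (Gs!i * Gs!k) $$ (0,0)" if "i < d" "k < d" for i k
  proof -
    have "(Gs!i * Gs!k) $$ (0,0) = (\<Sum>b\<in>{0..<K}. Gs!i $$ (0,b) * Gs!k $$ (b,0))"
      using Gc[OF that(1)] Gc[OF that(2)] K0 by (simp add: scalar_prod_def)
    also have "\<dots> = C i k" unfolding C_def lessThan_atLeast0
    proof (rule sum.cong[OF refl])
      fix b assume "b \<in> {0..<K}"
      then have "Gs!i $$ (0,b) = cnj (Gs!i $$ (b,0))"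
        using Gc[OF that(1)] K0 by (intro herm_idx[OF Gh[OF that(1)]]) auto
      then show "Gs!i $$ (0,b) * Gs!k $$ (b,0) = cnj (Gs!i $$ (b,0)) * Gs!k $$ (b,0)" by simp
    qed
    finally show ?thesis by simp
  qed
  have Cdiag: "C i i = 1" if "i < d" for i
    using Cprod[OF that that] Gsq[OF that] K0 by simp
  have Canti: "C k i = - C i k" if "i < d" "k < d" "i \<noteq> k" for i k
  proof -
    have "Gs!k * Gs!i = - (Gs!i * Gs!k)" using Ganti[of k i] that by simp
    then have "(Gs!k * Gs!i) $$ (0,0) = - ((Gs!i * Gs!k) $$ (0,0))"
      using Gc[OF that(1)] Gc[OF that(2)] K0 by simp
    then show ?thesis using Cprod that by simp
  qed
  have Cnorm: "(\<Sum>b<K. (cmod (Gs!i $$ (b,0)))\<^sup>2) = 1" if "i < d" for i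
  proof -
    have "complex_of_real (\<Sum>b<K. (cmod (Gs!i $$ (b,0)))\<^sup>2) = 1"
      using Cdiag[OF that] sum_cnj_self[where n=K and x="\<lambda>b. Gs!i $$ (b,0)"] unfolding C_def by metis
    then show ?thesis by (simp only: of_real_eq_1_iff)
  qed
  have Cbound: "cmod (C i k) \<le> 1" if "i < d" "k < d" for i k
    using cs_sum[where x="\<lambda>b. Gs!i $$ (b,0)" and y="\<lambda>b. Gs!k $$ (b,0)" and n=K] Cnorm[OF that(1)] Cnorm[OF that(2)]
    unfolding C_def by simp
  have Udiag: "U i i = complex_of_real ((vnorm (u i))\<^sup>2)" if "i < d" for i
    unfolding U_def by (rule ip_self[OF uc[OF that]])
  have Uik: "U i k = ipn n psi ((X i * X k) *\<^sub>v psi)" if "i < d" "k < d" for i k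
  proof -
    have "U i k = ipn n (X i *\<^sub>v psi) (X k *\<^sub>v psi)" unfolding U_def using Xu that by simp
    also have "\<dots> = ipn n psi (ctrans (X i) *\<^sub>v (X k *\<^sub>v psi))"
      using ip_adj[OF Xc[OF that(1)] assms(9), of "X k *\<^sub>v psi"] Xc[OF that(2)] assms(9)
      by (metis mult_mat_vec_carrier)
    also have "\<dots> = ipn n psi ((X i * X k) *\<^sub>v psi)"
      using Xh[OF that(1)] Xc[OF that(1)] Xc[OF that(2)] assms(9) by simp
    finally show ?thesis .
  qed
  have Ucomm: "U i k - U k i = ipn n psi ((As!i * As!k - As!k * As!i) *\<^sub>v psi)" if "i < d" "k < d" for i k
  proof -
    have "U i k - U k i = ipn n psi ((X i * X k) *\<^sub>v psi - (X k * X i) *\<^sub>v psi)"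
      using Uik[OF that] Uik[OF that(2,1)] Xc[OF that(1)] Xc[OF that(2)] assms(9)
      by (subst ip_minus[where n=n]) auto
    also have "(X i * X k) *\<^sub>v psi - (X k * X i) *\<^sub>v psi = (X i * X k - X k * X i) *\<^sub>v psi"
      using Xc[OF that(1)] Xc[OF that(2)] assms(9)
      by (intro minus_mult_distrib_mat_vec[symmetric]) auto
    also have "X i * X k - X k * X i = As!i * As!k - As!k * As!i"
      unfolding X_def by (rule shift_comm[OF Ac[OF that(1)] Ac[OF that(2)]])
    finally show ?thesis .
  qed
  have Ubound: "cmod (U i k - U k i) \<le> opnorm (As!i * As!k - As!k * As!i)" if "i < d" "k < d" for i k
  proof -
    have cc: "As!i * As!k - As!k * As!i \<in> carrier_mat n n"
      using Ac[OF that(1)] Ac[OF that(2)] by (intro minus_carrier_mat mult_carrier_mat)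
    have "cmod (U i k - U k i) \<le> vnorm psi * vnorm ((As!i * As!k - As!k * As!i) *\<^sub>v psi)"
      unfolding Ucomm[OF that] using cc assms(9) by (intro ip_bound) auto
    also have "\<dots> \<le> opnorm (As!i * As!k - As!k * As!i)"
    proof -
      have "psi \<in> carrier_vec (dim_col (As!i * As!k - As!k * As!i))"
        unfolding carrier_matD(2)[OF cc] by (rule assms(9))
      from opnorm_ge[OF this assms(10)] show ?thesis using assms(10) by simp
    qed
    finally show ?thesis .
  qed
  define Gm where "Gm i = kron (X i * Y) (Gs!i * Pmat m)" for i
  define Hm where "Hm i = kron (X i * ctrans Y) (Gs!i * Qmat m)" for i
  have F_eq: "F = msum N (\<lambda>i. Gm i + ctrans (Gm i)) {..<d} - msum N (\<lambda>i. Hm i + ctrans (Hm i)) {..<d}"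
    unfolding F_def Fmat_def Let_def Bn Gm_def Hm_def X_def Y_def N_def K_def d_def by simp
  have Fc: "F \<in> carrier_mat N N" unfolding F_eq by (intro minus_carrier_mat msum_idx(2))
  have XYc: "X i * Y \<in> carrier_mat n n" if "i < d" for i using Xc[OF that] Yc by auto
  have XcYc: "X i * ctrans Y \<in> carrier_mat n n" if "i < d" for i using Xc[OF that] cYc by auto
  have GPc: "Gs!i * Pmat m \<in> carrier_mat K K" if "i < d" for i using Gc[OF that] Pc by auto
  have GQc: "Gs!i * Qmat m \<in> carrier_mat K K" if "i < d" for i using Gc[OF that] Qc by auto
  have GP00: "(Gs!i * Pmat m) $$ (0,0) = g0 i" if "i < d" for i
  proof -
    have "(Gs!i * Pmat m) $$ (0,0) = (\<Sum>c\<in>{0..<K}. Gs!i $$ (0,c) * Pmat m $$ (c,0))"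
      using Gc[OF that] Pc K0 by (simp add: scalar_prod_def)
    also have "\<dots> = (\<Sum>c\<in>{0..<K}. if c = 0 then Gs!i $$ (0,c) else 0)"
      by (intro sum.cong refl) (simp add: Pidx)
    also have "\<dots> = g0 i" using K0 unfolding g0_def by simp
    finally show ?thesis .
  qed
  have GQ00: "(Gs!i * Qmat m) $$ (0,0) = 0" if "i < d" for i
  proof -
    have "(Gs!i * Qmat m) $$ (0,0) = (\<Sum>c\<in>{0..<K}. Gs!i $$ (0,c) * Qmat m $$ (c,0))"
      using Gc[OF that] Qc K0 by (simp add: scalar_prod_def)
    also have "\<dots> = 0"
      by (intro sum.neutral) (simp add: Qidx)
    finally show ?thesis .
  qed
  have g0r: "cnj (g0 i) = g0 i" if "i < d" for i
    using herm_idx[OF Gh[OF that], of 0 0] Gc[OF that] K0 unfolding g0_def by simp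
  have Fidx: "F $$ (a*K, a'*K) = (\<Sum>i<d. g0 i * ((X i * Y) $$ (a,a') + ctrans (X i * Y) $$ (a,a')))"
    if aa: "a < n" "a' < n" for a a'
  proof -
    have r: "a*K < N" using idx_lt[OF aa(1) K0] N_def by simp
    have c: "a'*K < N" using idx_lt[OF aa(2) K0] N_def by simp
    have G1: "(Gm i + ctrans (Gm i)) $$ (a*K, a'*K) = g0 i * ((X i * Y) $$ (a,a') + ctrans (X i * Y) $$ (a,a'))"
      if i: "i < d" for i
    proof -
      have gc: "Gm i \<in> carrier_mat N N" unfolding Gm_def N_def by (rule kron_carrier[OF XYc[OF i] GPc[OF i]])
      have "Gm i $$ (a*K, a'*K) = (X i * Y) $$ (a,a') * g0 i"
        unfolding Gm_def using kron_idx00[OF XYc[OF i] GPc[OF i] aa(1) K0 aa(2) K0] GP00[OF i] by simp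
      moreover have "ctrans (Gm i) $$ (a*K, a'*K) = cnj (Gm i $$ (a'*K, a*K))"
        using gc r c by (simp add: ctrans_idx)
      moreover have "Gm i $$ (a'*K, a*K) = (X i * Y) $$ (a',a) * g0 i"
        unfolding Gm_def using kron_idx00[OF XYc[OF i] GPc[OF i] aa(2) K0 aa(1) K0] GP00[OF i] by simp
      moreover have "ctrans (X i * Y) $$ (a,a') = cnj ((X i * Y) $$ (a',a))"
        using XYc[OF i] aa by (intro ctrans_idx) auto
      moreover have "(Gm i + ctrans (Gm i)) $$ (a*K, a'*K) = Gm i $$ (a*K, a'*K) + ctrans (Gm i) $$ (a*K, a'*K)"
        using gc ctrans_carrier[OF gc] r c by simp
      ultimately show ?thesis using g0r[OF i] by (simp add: algebra_simps)
    qed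
    have H1: "(Hm i + ctrans (Hm i)) $$ (a*K, a'*K) = 0" if i: "i < d" for i
    proof -
      have hc: "Hm i \<in> carrier_mat N N" unfolding Hm_def N_def by (rule kron_carrier[OF XcYc[OF i] GQc[OF i]])
      have "Hm i $$ (a*K, a'*K) = 0"
        unfolding Hm_def using kron_idx00[OF XcYc[OF i] GQc[OF i] aa(1) K0 aa(2) K0] GQ00[OF i] by simp
      moreover have "ctrans (Hm i) $$ (a*K, a'*K) = cnj (Hm i $$ (a'*K, a*K))"
        using hc r c by (simp add: ctrans_idx)
      moreover have "Hm i $$ (a'*K, a*K) = 0"
        unfolding Hm_def using kron_idx00[OF XcYc[OF i] GQc[OF i] aa(2) K0 aa(1) K0] GQ00[OF i] by simp
      moreover have "(Hm i + ctrans (Hm i)) $$ (a*K, a'*K) = Hm i $$ (a*K, a'*K) + ctrans (Hm i) $$ (a*K, a'*K)"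
        using hc ctrans_carrier[OF hc] r c by simp
      ultimately show ?thesis by simp
    qed
    have "F $$ (a*K, a'*K) = (\<Sum>i<d. (Gm i + ctrans (Gm i)) $$ (a*K, a'*K)) - (\<Sum>i<d. (Hm i + ctrans (Hm i)) $$ (a*K, a'*K))"
      unfolding F_eq using r c by (simp add: msum_idx)
    also have "\<dots> = (\<Sum>i<d. g0 i * ((X i * Y) $$ (a,a') + ctrans (X i * Y) $$ (a,a')))"
      using G1 H1 by simp
    finally show ?thesis .
  qed
  have ipM: "(\<Sum>a<n. cnj (psi$a) * (\<Sum>a'<n. M $$ (a,a') * psi$a')) = ipn n psi (M *\<^sub>v psi)"
    if "M \<in> carrier_mat n n" for M
    unfolding ipn_def using mv_idx[OF that assms(9)] by simp
  have crossF: "ipn N phi (F *\<^sub>v phi) = Cross"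
  proof -
    have "ipn N phi (F *\<^sub>v phi) = (\<Sum>a<n. cnj (psi$a) * (F *\<^sub>v phi) $ (a*K))"
      unfolding N_def phi_def by (rule ipn_phi[OF K0])
    also have "\<dots> = (\<Sum>a<n. cnj (psi$a) * (\<Sum>a'<n. F $$ (a*K, a'*K) * psi$a'))"
    proof (intro sum.cong refl arg_cong2[where f="(*)"])
      fix a assume a: "a \<in> {..<n}"
      have "a*K < N" using idx_lt[OF _ K0, of a n] a N_def by simp
      then show "(F *\<^sub>v phi) $ (a*K) = (\<Sum>a'<n. F $$ (a*K, a'*K) * psi$a')"
        unfolding phi_def using Fc by (intro phi_mult[OF K0]) (auto simp: N_def)
    qed
    also have "\<dots> = (\<Sum>a<n. cnj (psi$a) * (\<Sum>a'<n. (\<Sum>i<d. g0 i * ((X i * Y) $$ (a,a') + ctrans (X i * Y) $$ (a,a'))) * psi$a'))"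
      by (intro sum.cong refl) (simp add: Fidx)
    also have "\<dots> = (\<Sum>i<d. g0 i * ((\<Sum>a<n. cnj (psi$a) * (\<Sum>a'<n. (X i * Y) $$ (a,a') * psi$a'))
        + (\<Sum>a<n. cnj (psi$a) * (\<Sum>a'<n. ctrans (X i * Y) $$ (a,a') * psi$a'))))"
      by (rule ip_sum_lin)
    also have "\<dots> = (\<Sum>i<d. g0 i * (ipn n (u i) w + cnj (ipn n (u i) w)))"
    proof (intro sum.cong refl)
      fix i assume "i \<in> {..<d}"
      then have i: "i < d" by simp
      have 1: "ipn n psi ((X i * Y) *\<^sub>v psi) = ipn n (u i) w"
      proof -
        have "ipn n psi ((X i * Y) *\<^sub>v psi) = ipn n psi (ctrans (X i) *\<^sub>v w)"
          using Xc[OF i] Yc assms(9) Xh[OF i] Yw by simp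
        also have "\<dots> = ipn n (X i *\<^sub>v psi) w" by (rule ip_adj[OF Xc[OF i] assms(9) wc])
        finally show ?thesis using Xu[OF i] by simp
      qed
      have 2: "ipn n psi (ctrans (X i * Y) *\<^sub>v psi) = cnj (ipn n (u i) w)"
        using ip_adj[OF XYc[OF i] assms(9) assms(9)] ip_cnj[of n "(X i * Y) *\<^sub>v psi" psi] 1 by simp
      show "g0 i * ((\<Sum>a<n. cnj (psi$a) * (\<Sum>a'<n. (X i * Y) $$ (a,a') * psi$a'))
        + (\<Sum>a<n. cnj (psi$a) * (\<Sum>a'<n. ctrans (X i * Y) $$ (a,a') * psi$a'))) = g0 i * (ipn n (u i) w + cnj (ipn n (u i) w))"
        using ipM[OF XYc[OF i]] ipM[OF ctrans_carrier[OF XYc[OF i]]] 1 2 by simp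
    qed
    also have "\<dots> = Cross" unfolding Cross_def
      by (intro sum.cong refl) (simp add: g0r ip_cnj[of n w] algebra_simps)
    finally show ?thesis .
  qed
  have Fbound: "cmod Cross \<le> opnorm F"
  proof -
    have "cmod Cross \<le> vnorm phi * vnorm (F *\<^sub>v phi)"
      unfolding crossF[symmetric] using phic Fc by (intro ip_bound) auto
    also have "\<dots> \<le> opnorm F" using phin opnorm_ge[of phi F] phic Fc by simp
    finally show ?thesis .
  qed
  define S where "S = {(i,k). i < d \<and> k < d \<and> i \<noteq> k}"
  define Off where "Off = (\<Sum>(i,k)\<in>S. C i k * U i k)"
  have Obound: "cmod Off \<le> (\<Sum>(i,k)\<in>S. opnorm (As!i * As!k - As!k * As!i))"
    unfolding Off_def S_def
    by (rule offdiag_bound[where C=C and U=U and E="\<lambda>i k. opnorm (As!i * As!k - As!k * As!i)"])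
       (auto intro: Canti Cbound Ubound)
  have diag: "(\<Sum>i<d. C i i * U i i) = complex_of_real (\<Sum>i<d. (vnorm (u i))\<^sup>2)"
    unfolding of_real_sum by (intro sum.cong refl) (simp add: Cdiag Udiag)
  have split: "(\<Sum>i<d. \<Sum>k<d. C i k * U i k) = (\<Sum>i<d. C i i * U i i) + Off"
    unfolding Off_def S_def by (rule sum_offdiag)
  have W: "Re (ipn n w w) = (vnorm w)\<^sup>2" using ip_self[OF wc] by simp
  have "(vnorm (L *\<^sub>v phi))\<^sup>2 = (\<Sum>i<d. (vnorm (u i))\<^sup>2) + Re Off + Re Cross + (vnorm w)\<^sup>2"
    unfolding vL split diag using W by simp
  also have "\<dots> \<le> (\<Sum>i<d. (vnorm (u i))\<^sup>2) + (\<Sum>(i,k)\<in>S. opnorm (As!i * As!k - As!k * As!i)) + opnorm F + (vnorm w)\<^sup>2"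
    using complex_Re_le_cmod[of Off] complex_Re_le_cmod[of Cross] Obound Fbound by linarith
  also have "\<dots> \<le> eps1 + eps2"
    using assms(13,14) unfolding u_def w_def d_def S_def F_def by linarith
  finally have "(vnorm (L *\<^sub>v phi))\<^sup>2 \<le> eps1 + eps2" .
  then have "vnorm (L *\<^sub>v phi) \<le> sqrt (eps1 + eps2)" by (rule real_le_rsqrt)
  moreover have "sigma_min L \<le> vnorm (L *\<^sub>v phi)"
    using Lc phic phin by (intro sigma_min_le) auto
  ultimately show ?thesis
    unfolding clifford_radial_pseudospectrum_def clifford_radial_gap_def L_def[symmetric]
    using assms(8) unfolding L_def by simp
qed

end
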